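(* Let $\ell$ and $m$ be positive integers with $\ell\le m$, let $G$ be a group written additively, let $\mathbf{a}=(a_1,\dots,a_m)$ be a sequence of elements of $G$, and let $A$ be the set of distinct terms of $\mathbf{a}$. Then \[ |\Sigma^{\ell}(\mathbf{a})|\ \ge\ \min\Big(p(G),\ \sum_{a\in A}\mu_{\mathbf{a}}(a)-\ell+1\Big). \]
   Context: $p(G)$ is the order of the smallest nontrivial subgroup of $G$, or $\infty$ if no such subgroup exists. $\Sigma^{\ell}(\mathbf{a})$ is the set of all elements $a_{i_1}+\cdots+a_{i_\ell}$ with $i_1,\dots,i_\ell\in[1,m]$ pairwise distinct, taken in any order. $\rho_a(\mathbf{a})=|\{i\in[1,m]:a_i=a\}|$ and $\mu_{\mathbf{a}}(a)=\min(\ell,\rho_a(\mathbf{a}))$. *)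

theory Defs
  imports Main "HOL-Library.Extended_Nat"
begin

definition is_subgroup :: "'a::group_add set \<Rightarrow> bool" where
  "is_subgroup H \<longleftrightarrow> 0 \<in> H \<and> (\<forall>x\<in>H. \<forall>y\<in>H. x + y \<in> H) \<and> (\<forall>x\<in>H. - x \<in> H)"

text \<open>p(G): order of the smallest nontrivial subgroup, or infinity if none exists
  (an infinite subgroup has order infinity).\<close>
definition p_grp :: "'a::group_add itself \<Rightarrow> enat" where
  "p_grp _ = (INF H \<in> {H :: 'a set. is_subgroup H \<and> H \<noteq> {0}}.
                 (if finite H then enat (card H) else \<infinity>))"

definition Sigma_l :: "nat \<Rightarrow> nat \<Rightarrow> (nat \<Rightarrow> 'a::group_add) \<Rightarrow> 'a set" where
  "Sigma_l l m a = {sum_list (map a is) | is. distinct is \<and> length is = l \<and> set is \<subseteq> {1..m}}"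

definition rho :: "nat \<Rightarrow> (nat \<Rightarrow> 'a) \<Rightarrow> 'a \<Rightarrow> nat" where
  "rho m a x = card {i \<in> {1..m}. a i = x}"

definition mu :: "nat \<Rightarrow> nat \<Rightarrow> (nat \<Rightarrow> 'a) \<Rightarrow> 'a \<Rightarrow> nat" where
  "mu l m a x = min l (rho m a x)"

end

theory Submission
  imports Defs
begin

definition ss :: "'a::group_add set \<Rightarrow> 'a set \<Rightarrow> 'a set" where
  "ss A B = {x + y | x y. x \<in> A \<and> y \<in> B}"

lemma ss_image: "ss A B = (\<lambda>(x,y). x + y) ` (A \<times> B)"
  unfolding ss_def by auto

lemma ss_finite: "finite A \<Longrightarrow> finite B \<Longrightarrow> finite (ss A B)"
  unfolding ss_image by simp

lemma ss_card_left:
  assumes "finite A" "finite B" "y \<in> B" shows "card A \<le> card (ss A B)"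
proof -
  have "card A = card ((\<lambda>x. x + y) ` A)" by (simp add: card_image inj_on_def)
  also have "\<dots> \<le> card (ss A B)"
    by (rule card_mono[OF ss_finite[OF assms(1,2)]]) (use assms in \<open>auto simp: ss_def\<close>)
  finally show ?thesis .
qed

lemma ss_card_right:
  assumes "finite A" "finite B" "x \<in> A" shows "card B \<le> card (ss A B)"
proof -
  have "card B = card ((\<lambda>y. x + y) ` B)" by (simp add: card_image inj_on_def)
  also have "\<dots> \<le> card (ss A B)"
    by (rule card_mono[OF ss_finite[OF assms(1,2)]]) (use assms in \<open>auto simp: ss_def\<close>)
  finally show ?thesis .
qed

lemma stab_bound:
  fixes g :: "'a::group_add"
  assumes fin: "finite B" and ne: "B \<noteq> {}" and g0: "g \<noteq> 0" and st: "\<forall>y\<in>B. g + y \<in> B"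
  shows "p_grp TYPE('a) \<le> enat (card B)"
proof -
  define H where "H = {x. \<forall>y\<in>B. x + y \<in> B}"
  have perm: "(\<lambda>y. x + y) ` B = B" if "x \<in> H" for x
  proof (rule card_subset_eq[OF fin])
    show "(+) x ` B \<subseteq> B" using that by (auto simp: H_def)
    show "card ((+) x ` B) = card B" by (simp add: card_image inj_on_def)
  qed
  obtain b0 where b0: "b0 \<in> B" using ne by blast
  have Hsub: "H \<subseteq> (\<lambda>y. y - b0) ` B"
  proof
    fix x assume "x \<in> H"
    then have "x + b0 \<in> B" using b0 by (auto simp: H_def)
    moreover have "x = (x + b0) - b0" by simp
    ultimately show "x \<in> (\<lambda>y. y - b0) ` B" by blast
  qed
  have finH: "finite H" using Hsub fin finite_surj by blast
  have cardH: "card H \<le> card B"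
    using card_mono[OF finite_imageI[OF fin] Hsub] card_image_le[OF fin, of "\<lambda>y. y - b0"] by linarith
  have sg: "is_subgroup H"
    unfolding is_subgroup_def
  proof (intro conjI ballI)
    show "0 \<in> H" by (simp add: H_def)
  next
    fix x y assume "x \<in> H" "y \<in> H"
    then show "x + y \<in> H" by (auto simp: H_def add.assoc)
  next
    fix x assume xH: "x \<in> H"
    show "- x \<in> H" unfolding H_def mem_Collect_eq
    proof
      fix y assume "y \<in> B"
      then have "y \<in> (\<lambda>y. x + y) ` B" using perm[OF xH] by simp
      then obtain y' where "y' \<in> B" "y = x + y'" by blast
      then show "- x + y \<in> B" by (metis minus_add_cancel)
    qed
  qed
  have "g \<in> H" using st by (simp add: H_def)
  then have "H \<noteq> {0}" using g0 by blast
  then have "p_grp TYPE('a) \<le> (if finite H then enat (card H) else \<infinity>)"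
    unfolding p_grp_def using sg by (intro INF_lower) simp
  also have "\<dots> \<le> enat (card B)" using finH cardH by simp
  finally show ?thesis .
qed

lemma card_transl_right:
  fixes X :: "'a::group_add set"
  assumes "finite X"
  shows "card (X \<union> (\<lambda>x. x + g) ` X) + card {x\<in>X. x + g \<in> X} = 2 * card X"
proof -
  have i1: "card ((\<lambda>x. x + g) ` X) = card X" by (simp add: card_image inj_on_def)
  have "(\<lambda>x. x + g) ` {x\<in>X. x + g \<in> X} = X \<inter> (\<lambda>x. x + g) ` X" by auto
  moreover have "card ((\<lambda>x. x + g) ` {x\<in>X. x + g \<in> X}) = card {x\<in>X. x + g \<in> X}"
    by (simp add: card_image inj_on_def)
  ultimately have i2: "card {x\<in>X. x + g \<in> X} = card (X \<inter> (\<lambda>x. x + g) ` X)" by simp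
  show ?thesis using card_Un_Int[OF assms finite_imageI[OF assms, of "\<lambda>x. x + g"]] i1 i2 by simp
qed

lemma card_transl_left:
  fixes X :: "'a::group_add set"
  assumes "finite X"
  shows "card (X \<union> (\<lambda>x. g + x) ` X) + card {x\<in>X. g + x \<in> X} = 2 * card X"
proof -
  have i1: "card ((\<lambda>x. g + x) ` X) = card X" by (simp add: card_image inj_on_def)
  have "(\<lambda>x. g + x) ` {x\<in>X. g + x \<in> X} = X \<inter> (\<lambda>x. g + x) ` X" by auto
  moreover have "card ((\<lambda>x. g + x) ` {x\<in>X. g + x \<in> X}) = card {x\<in>X. g + x \<in> X}"
    by (simp add: card_image inj_on_def)
  ultimately have i2: "card {x\<in>X. g + x \<in> X} = card (X \<inter> (\<lambda>x. g + x) ` X)" by simp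
  show ?thesis using card_Un_Int[OF assms finite_imageI[OF assms, of "\<lambda>x. g + x"]] i1 i2 by simp
qed

lemma kemperman:
  fixes A B :: "'a::group_add set"
  assumes fA: "finite A" and fB: "finite B" and nA: "A \<noteq> {}" and nB: "B \<noteq> {}"
  shows "min (p_grp TYPE('a)) (enat (card A + card B - 1)) \<le> enat (card (ss A B))"
proof (cases "p_grp TYPE('a) \<le> enat (card (ss A B))")
  case True then show ?thesis by (simp add: min.coboundedI1)
next
  case False
  define C where "C = ss A B"
  have finC: "finite C" unfolding C_def using fA fB by (rule ss_finite)
  have small: "\<not> (\<forall>y\<in>Y. g + y \<in> Y)" if "finite Y" "Y \<noteq> {}" "card Y \<le> card C" "g \<noteq> 0" for Y and g :: 'a
  proof
    assume "\<forall>y\<in>Y. g + y \<in> Y"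
    then have "p_grp TYPE('a) \<le> enat (card Y)" using stab_bound that by blast
    also have "\<dots> \<le> enat (card C)" using that by simp
    finally show False using False C_def by simp
  qed
  show ?thesis
  proof (rule ccontr)
    assume "\<not> ?thesis"
    then have "enat (card C) < enat (card A + card B - 1)" unfolding C_def min_le_iff_disj
      by auto
    then have cex: "card C + 2 \<le> card A + card B" by simp
    define F where "F = {(X,Y). finite X \<and> finite Y \<and> X \<noteq> {} \<and> Y \<noteq> {} \<and> ss X Y \<subseteq> C \<and>
                                card (ss X Y) + 2 \<le> card X + card Y}"
    define e where "e = (\<lambda>(X::'a set,Y::'a set). card (ss X Y) + card C - (card X + card Y))"
    have bnd: "card X \<le> card (ss X Y) \<and> card Y \<le> card C" if "(X,Y) \<in> F" for X Y
    proof -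
      from that have f: "finite X" "finite Y" "X \<noteq> {}" "Y \<noteq> {}" "ss X Y \<subseteq> C" by (auto simp: F_def)
      then obtain x y where "x \<in> X" "y \<in> Y" by blast
      then show ?thesis using ss_card_left[OF f(1,2)] ss_card_right[OF f(1,2)] card_mono[OF finC f(5)]
        by fastforce
    qed
    have AB: "(A,B) \<in> F" unfolding F_def C_def using fA fB nA nB cex C_def by auto
    obtain q0 where q0: "q0 \<in> F" and m1: "\<forall>q. q \<in> F \<longrightarrow> e q0 \<le> e q"
      using ex_has_least_nat[of "\<lambda>q. q \<in> F", OF AB, of e] by blast
    obtain q where q: "q \<in> F \<and> e q = e q0" and m2: "\<forall>q'. q' \<in> F \<and> e q' = e q0 \<longrightarrow> card (snd q) \<le> card (snd q')"
      using ex_has_least_nat[of "\<lambda>q. q \<in> F \<and> e q = e q0" q0 "\<lambda>q. card (snd q)"] q0 by blast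
    obtain X Y where qXY: "q = (X,Y)" by (cases q)
    have XY: "(X,Y) \<in> F" using q qXY by simp
    from XY have fX: "finite X" and fY: "finite Y" and nX: "X \<noteq> {}" and nY: "Y \<noteq> {}"
      and sub: "ss X Y \<subseteq> C" and dX: "card (ss X Y) + 2 \<le> card X + card Y" by (auto simp: F_def)
    have bXY: "card X \<le> card (ss X Y)" "card Y \<le> card C" using bnd[OF XY] by auto
    have key: "\<not> (\<exists>x\<in>X. x + (b2 - b1) \<in> X)" if b1: "b1 \<in> Y" and b2: "b2 \<in> Y" and ne: "b1 \<noteq> b2" for b1 b2
    proof
      assume "\<exists>x\<in>X. x + (b2 - b1) \<in> X"
      define g where "g = b2 - b1"
      have g0: "g \<noteq> 0" using ne by (simp add: g_def)
      define X1 where "X1 = X \<union> (\<lambda>x. x + g) ` X"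
      define Y1 where "Y1 = {y\<in>Y. g + y \<in> Y}"
      define X2 where "X2 = {x\<in>X. x + g \<in> X}"
      define Y2 where "Y2 = Y \<union> (\<lambda>y. g + y) ` Y"
      have cX: "card X1 + card X2 = 2 * card X" unfolding X1_def X2_def using card_transl_right[OF fX] .
      have cY: "card Y2 + card Y1 = 2 * card Y" unfolding Y1_def Y2_def using card_transl_left[OF fY] .
      have fX1: "finite X1" "finite X2" "finite Y1" "finite Y2" using fX fY by (auto simp: X1_def X2_def Y1_def Y2_def)
      have nX2: "X2 \<noteq> {}" using \<open>\<exists>x\<in>X. x + (b2 - b1) \<in> X\<close> by (auto simp: X2_def g_def)
      have nY1: "Y1 \<noteq> {}" using b1 b2 by (auto simp: Y1_def g_def)
      have nX1: "X1 \<noteq> {}" "Y2 \<noteq> {}" using nX nY by (auto simp: X1_def Y2_def)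
      have s1: "ss X1 Y1 \<subseteq> ss X Y"
      proof
        fix z assume "z \<in> ss X1 Y1"
        then obtain x y where z: "z = x + y" "x \<in> X1" "y \<in> Y1" by (auto simp: ss_def)
        show "z \<in> ss X Y"
        proof (cases "x \<in> X")
          case True then show ?thesis using z by (auto simp: ss_def Y1_def)
        next
          case False
          then obtain x' where "x' \<in> X" "x = x' + g" using z by (auto simp: X1_def)
          then have "z = x' + (g + y)" using z by (simp add: add.assoc)
          then show ?thesis using z \<open>x' \<in> X\<close> by (auto simp: ss_def Y1_def)
        qed
      qed
      have s2: "ss X2 Y2 \<subseteq> ss X Y"
      proof
        fix z assume "z \<in> ss X2 Y2"
        then obtain x y where z: "z = x + y" "x \<in> X2" "y \<in> Y2" by (auto simp: ss_def)
        show "z \<in> ss X Y"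
        proof (cases "y \<in> Y")
          case True then show ?thesis using z by (auto simp: ss_def X2_def)
        next
          case False
          then obtain y' where "y' \<in> Y" "y = g + y'" using z by (auto simp: Y2_def)
          then have "z = (x + g) + y'" using z by (simp add: add.assoc)
          then show ?thesis using z \<open>y' \<in> Y\<close> by (auto simp: ss_def X2_def)
        qed
      qed
      have cs1: "card (ss X1 Y1) \<le> card (ss X Y)" using s1 ss_finite[OF fX fY] card_mono by blast
      have cs2: "card (ss X2 Y2) \<le> card (ss X Y)" using s2 ss_finite[OF fX fY] card_mono by blast
      show False
      proof (cases "card X + card Y \<le> card X1 + card Y1")
        case True
        have F1: "(X1,Y1) \<in> F" unfolding F_def using fX1 nX1 nY1 s1 sub cs1 dX True by auto
        have "e (X1,Y1) \<le> e (X,Y)" unfolding e_def using True cs1 by simp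
        moreover have "e (X,Y) \<le> e (X1,Y1)" using m1 F1 q qXY by simp
        ultimately have "e (X1,Y1) = e q0" using q qXY by simp
        then have le: "card Y \<le> card Y1" using m2 F1 qXY by fastforce
        have ps: "Y1 \<subset> Y"
        proof -
          have "Y1 \<subseteq> Y" by (auto simp: Y1_def)
          moreover have "Y1 \<noteq> Y"
          proof
            assume "Y1 = Y"
            then have "\<forall>y\<in>Y. g + y \<in> Y" by (auto simp: Y1_def)
            then show False using small[OF fY nY bXY(2) g0] by blast
          qed
          ultimately show ?thesis by blast
        qed
        show False using psubset_card_mono[OF fY ps] le by linarith
      next
        case False
        then have T: "card X + card Y < card X2 + card Y2" using cX cY by linarith
        have F2: "(X2,Y2) \<in> F" unfolding F_def using fX1 nX1 nX2 s2 sub cs2 dX T by auto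
        have bb: "card X2 + card Y2 \<le> card (ss X2 Y2) + card C" using bnd[OF F2] by linarith
        have "e (X2,Y2) < e (X,Y)" unfolding e_def using T cs2 bb bXY by simp
        moreover have "e (X,Y) \<le> e (X2,Y2)" using m1 F2 q qXY by simp
        ultimately show False by simp
      qed
    qed
    have inj: "inj_on (\<lambda>(x,y). x + y) (X \<times> Y)"
    proof (rule inj_onI, clarsimp)
      fix x1 y1 x2 y2 assume h: "x1 \<in> X" "y1 \<in> Y" "x2 \<in> X" "y2 \<in> Y" "x1 + y1 = x2 + y2"
      show "x1 = x2 \<and> y1 = y2"
      proof (cases "y1 = y2")
        case True
        then have "x1 + y2 = x2 + y2" using h(5) by simp
        then have "x1 = x2" by (rule add_right_imp_eq)
        then show ?thesis using True by simp
      next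
        case False
        have "x1 + (y1 - y2) = (x1 + y1) - y2" by (simp only: diff_conv_add_uminus add.assoc)
        also have "\<dots> = x2" by (simp add: h(5))
        finally have "x1 + (y1 - y2) = x2" .
        then show ?thesis using key[OF h(4) h(2) not_sym[OF False]] h(1,3) by blast
      qed
    qed
    have "card (ss X Y) = card X * card Y" unfolding ss_image using card_image[OF inj] card_cartesian_product by simp
    moreover have "card X + card Y \<le> card X * card Y + 1"
    proof -
      obtain u v where "card X = Suc u" "card Y = Suc v" using fX fY nX nY
        by (metis card_0_eq not0_implies_Suc)
      then show ?thesis by simp
    qed
    ultimately show False using dX by linarith
  qed
qed

definition SigmaI :: "nat \<Rightarrow> nat set \<Rightarrow> (nat \<Rightarrow> 'a::group_add) \<Rightarrow> 'a set" where
  "SigmaI l I a = {sum_list (map a is) | is. distinct is \<and> length is = l \<and> set is \<subseteq> I}"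

definition rhoI :: "nat set \<Rightarrow> (nat \<Rightarrow> 'a) \<Rightarrow> 'a \<Rightarrow> nat" where
  "rhoI I a x = card {i \<in> I. a i = x}"

definition NI :: "nat \<Rightarrow> nat set \<Rightarrow> (nat \<Rightarrow> 'a) \<Rightarrow> nat" where
  "NI l I a = (\<Sum>x\<in>a ` I. min l (rhoI I a x))"

lemma SigmaI_image: "SigmaI l I a = (\<lambda>js. sum_list (map a js)) ` {js. distinct js \<and> length js = l \<and> set js \<subseteq> I}"
  unfolding SigmaI_def by auto

lemma SigmaI_finite: "finite I \<Longrightarrow> finite (SigmaI l I a)"
proof -
  assume fI: "finite I"
  have "{js. distinct js \<and> length js = l \<and> set js \<subseteq> I} \<subseteq> {js. set js \<subseteq> I \<and> length js = l}" by auto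
  then have "finite {js. distinct js \<and> length js = l \<and> set js \<subseteq> I}"
    using finite_lists_length_eq[OF fI, of l] by (rule finite_subset)
  then show ?thesis unfolding SigmaI_image by (rule finite_imageI)
qed

lemma SigmaI_nonempty:
  assumes "finite I" "l \<le> card I" shows "SigmaI l I a \<noteq> {}"
proof -
  obtain J where J: "J \<subseteq> I" "card J = l" "finite J" using obtain_subset_with_card_n[OF assms(2)] by blast
  let ?js = "sorted_list_of_set J"
  have "?js \<in> {js. distinct js \<and> length js = l \<and> set js \<subseteq> I}" using J by simp
  then have "{js. distinct js \<and> length js = l \<and> set js \<subseteq> I} \<noteq> {}" by blast
  then show ?thesis unfolding SigmaI_image by simp
qed

lemma rho_pos: "finite I \<Longrightarrow> x \<in> a ` I \<Longrightarrow> 1 \<le> rhoI I a x"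
proof -
  assume fI: "finite I" and x: "x \<in> a ` I"
  then obtain i where i: "i \<in> I" "a i = x" by blast
  have "finite {i \<in> I. a i = x}" using fI by simp
  moreover have "{i \<in> I. a i = x} \<noteq> {}" using i by blast
  ultimately have "card {i \<in> I. a i = x} \<noteq> 0" by simp
  then show ?thesis unfolding rhoI_def by simp
qed

lemma nat_aux: "(r::nat) * l \<le> n \<Longrightarrow> 1 \<le> l \<Longrightarrow> l \<le> n \<Longrightarrow> r \<le> n - l + 1"
proof (cases r)
  case (Suc r')
  assume h: "r * l \<le> n" "1 \<le> l" "l \<le> n"
  obtain l' where l': "l = Suc l'" using h(2) by (cases l) auto
  have "r * l = r' * l' + r' + l' + 1" using Suc l' by simp
  then show ?thesis using h Suc l' by linarith
qed simp

lemma main_step: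
  fixes a :: "nat \<Rightarrow> 'a::group_add"
  assumes fI: "finite I" and l1: "1 \<le> l'" and lI: "Suc l' \<le> card I"
    and IH: "\<And>I'. finite I' \<Longrightarrow> l' \<le> card I' \<Longrightarrow>
              min (p_grp TYPE('a)) (enat (NI l' I' a - l' + 1)) \<le> enat (card (SigmaI l' I' a))"
  shows "min (p_grp TYPE('a)) (enat (NI (Suc l') I a - Suc l' + 1)) \<le> enat (card (SigmaI (Suc l') I a))"
proof -
  define l where "l = Suc l'"
  define Av where "Av = a ` I"
  define rho where "rho = rhoI I a"
  define R where "R = {x \<in> Av. l \<le> rho x}"
  define k where "k = min (card Av) (card I - l + 1)"
  have fAv: "finite Av" using fI by (simp add: Av_def)
  have RA: "R \<subseteq> Av" by (auto simp: R_def)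
  have fib_fin: "finite {i \<in> I. a i = x}" for x using fI by simp
  have cR1: "card R * l \<le> card I"
  proof -
    have "card R * l = (\<Sum>x\<in>R. l)" by simp
    also have "\<dots> \<le> (\<Sum>x\<in>R. card {i \<in> I. a i = x})"
      by (rule sum_mono) (auto simp: R_def rho_def rhoI_def)
    also have "\<dots> = card (\<Union>x\<in>R. {i \<in> I. a i = x})"
      by (rule card_UN_disjoint[symmetric]) (use fAv RA finite_subset fib_fin in auto)
    also have "\<dots> \<le> card I" by (rule card_mono[OF fI]) auto
    finally show ?thesis .
  qed
  have cRk: "card R \<le> k"
    using nat_aux[OF cR1] card_mono[OF fAv RA] lI by (simp add: k_def l_def)
  have "k - card R \<le> card (Av - R)" using card_Diff_subset[OF finite_subset[OF RA fAv] RA] k_def by simp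
  then obtain W where W: "W \<subseteq> Av - R" "card W = k - card R" "finite W"
    using obtain_subset_with_card_n by blast
  define V where "V = R \<union> W"
  have VA: "V \<subseteq> Av" using W RA by (auto simp: V_def)
  have cV: "card V = k"
  proof -
    have "card V = card R + card W" unfolding V_def
      by (rule card_Un_disjoint) (use W finite_subset[OF RA fAv] in auto)
    then show ?thesis using W cRk by simp
  qed
  define r where "r = (\<lambda>x. SOME i. i \<in> I \<and> a i = x)"
  have r: "r x \<in> I \<and> a (r x) = x" if "x \<in> Av" for x
    unfolding r_def by (rule someI_ex) (use that Av_def in auto)
  define J where "J = r ` V"
  have injr: "inj_on r V" by (rule inj_on_inverseI[of _ a]) (use r VA in auto)
  have cJ: "card J = k" using card_image[OF injr] cV J_def by simp
  have JI: "J \<subseteq> I" using r VA J_def by auto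
  have fJ: "finite J" using JI fI finite_subset by blast
  have aJ: "a ` J = V" unfolding J_def using r VA by force
  define I' where "I' = I - J"
  have fI': "finite I'" using fI I'_def by simp
  have kpos: "1 \<le> k"
  proof -
    have "I \<noteq> {}" using lI by auto
    then have "Av \<noteq> {}" by (simp add: Av_def)
    then have "card Av \<ge> 1" using fAv by (simp add: Suc_le_eq card_gt_0_iff)
    then show ?thesis using lI by (simp add: k_def l_def)
  qed
  have kle: "k \<le> card I - l + 1" by (simp add: k_def)
  have cI': "card I' = card I - k" unfolding I'_def using card_Diff_subset[OF fJ JI] cJ by simp
  have lI': "l' \<le> card I'" using cI' kle lI l_def by simp
  define S' where "S' = SigmaI l' I' a"
  define N where "N = NI l I a"
  define N' where "N' = NI l' I' a"
  have IH': "min (p_grp TYPE('a)) (enat (N' - l' + 1)) \<le> enat (card S')"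
    using IH[OF fI' lI'] by (simp add: N'_def S'_def)
  have fib': "{i \<in> I'. a i = x} = {i \<in> I. a i = x} - (if x \<in> V then {r x} else {})" if "x \<in> Av" for x
  proof -
    have "J \<inter> {i. a i = x} = (if x \<in> V then {r x} else {})"
      using r VA unfolding J_def by auto
    then show ?thesis unfolding I'_def by auto
  qed
  have rho': "rhoI I' a x = rho x - (if x \<in> V then 1 else 0)" if "x \<in> Av" for x
  proof (cases "x \<in> V")
    case True
    then have "r x \<in> {i \<in> I. a i = x}" using r that by auto
    then show ?thesis using fib'[OF that] True unfolding rhoI_def rho_def by (simp add: card_Diff_singleton)
  next
    case False then show ?thesis using fib'[OF that] unfolding rhoI_def rho_def by simp
  qed
  have pw: "min l (rho x) \<le> min l' (rhoI I' a x) + (if x \<in> V then 1 else 0)" if "x \<in> Av" for x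
  proof (cases "x \<in> V")
    case True
    have "1 \<le> rho x" using rho_pos[OF fI] that Av_def rho_def by simp
    then show ?thesis using rho'[OF that] True l_def by simp
  next
    case False
    then have "x \<notin> R" using V_def by auto
    then have "rho x < l" using that R_def by auto
    then show ?thesis using rho'[OF that] False l_def by simp
  qed
  have NN: "N \<le> N' + k"
  proof -
    have "N = (\<Sum>x\<in>Av. min l (rho x))" by (simp add: N_def NI_def Av_def rho_def)
    also have "\<dots> \<le> (\<Sum>x\<in>Av. min l' (rhoI I' a x) + (if x \<in> V then 1 else 0))"
      by (rule sum_mono) (rule pw)
    also have "\<dots> = (\<Sum>x\<in>Av. min l' (rhoI I' a x)) + (\<Sum>x\<in>Av. (if x \<in> V then 1 else 0))"
      by (simp add: sum.distrib)
    also have "(\<Sum>x\<in>Av. (if x \<in> V then 1 else 0)) = card V"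
    proof -
      have "(\<Sum>x\<in>Av. (if x \<in> V then 1 else 0)) = (\<Sum>x\<in>Av \<inter> V. 1::nat)"
        using sum.inter_restrict[OF fAv, of "\<lambda>x. 1::nat" V] by simp
      also have "Av \<inter> V = V" using VA by blast
      finally show ?thesis by simp
    qed
    also have "(\<Sum>x\<in>Av. min l' (rhoI I' a x)) = N'"
    proof -
      have h1: "a ` I' \<subseteq> Av" unfolding I'_def Av_def by auto
      have h2: "\<forall>x\<in>Av - a ` I'. min l' (rhoI I' a x) = 0"
      proof
        fix x assume "x \<in> Av - a ` I'"
        then have "{i \<in> I'. a i = x} = {}" by blast
        then show "min l' (rhoI I' a x) = 0" unfolding rhoI_def by (metis card.empty min_0R)
      qed
      show ?thesis unfolding N'_def NI_def by (rule sum.mono_neutral_right[OF fAv h1 h2])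
    qed
    finally show ?thesis using cV by simp
  qed
  have fS': "finite S'" using SigmaI_finite[OF fI'] S'_def by simp
  have nS': "S' \<noteq> {}" using SigmaI_nonempty[OF fI' lI'] S'_def by simp
  have fV: "finite V" using VA fAv finite_subset by blast
  have nV: "V \<noteq> {}" using cV kpos by auto
  have K: "min (p_grp TYPE('a)) (enat (card S' + card V - 1)) \<le> enat (card (ss S' V))"
    by (rule kemperman[OF fS' fV nS' nV])
  have sub: "ss S' V \<subseteq> SigmaI l I a"
  proof
    fix z assume "z \<in> ss S' V"
    then obtain s v where z: "z = s + v" "s \<in> S'" "v \<in> V" by (auto simp: ss_def)
    then obtain js where js: "s = sum_list (map a js)" "distinct js" "length js = l'" "set js \<subseteq> I'"
      unfolding S'_def SigmaI_def by blast
    obtain j where j: "j \<in> J" "v = a j" using z(3) aJ by blast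
    have "distinct (js @ [j]) \<and> length (js @ [j]) = l \<and> set (js @ [j]) \<subseteq> I"
      using js j JI unfolding I'_def l_def by auto
    moreover have "z = sum_list (map a (js @ [j]))" using z js j by simp
    ultimately show "z \<in> SigmaI l I a" unfolding SigmaI_def by blast
  qed
  have cs: "card (ss S' V) \<le> card (SigmaI l I a)" by (rule card_mono[OF SigmaI_finite[OF fI] sub])
  have goal: "min (p_grp TYPE('a)) (enat (N - l + 1)) \<le> enat (card (SigmaI l I a))"
  proof (cases "p_grp TYPE('a) \<le> enat (card S')")
    case True
    have "card S' \<le> card S' + card V - 1" using kpos cV by simp
    then have "enat (card S') \<le> enat (card S' + card V - 1)" by simp
    then have "p_grp TYPE('a) \<le> enat (card S' + card V - 1)" using True by (rule order_trans[rotated])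
    then have "p_grp TYPE('a) \<le> enat (card (ss S' V))" using K by (simp add: min.absorb1)
    then have "p_grp TYPE('a) \<le> enat (card (SigmaI l I a))" by (rule order_trans) (simp add: cs)
    then show ?thesis by (simp add: min.coboundedI1)
  next
    case False
    then have "enat (N' - l' + 1) \<le> enat (card S')" using IH' by (simp add: min_le_iff_disj)
    then have "N' - l' + 1 \<le> card S'" by simp
    then have "N - l + 1 \<le> card S' + card V - 1" using NN cV kpos l_def by linarith
    then have "min (p_grp TYPE('a)) (enat (N - l + 1)) \<le> min (p_grp TYPE('a)) (enat (card S' + card V - 1))"
      by (intro min.mono) simp_all
    also have "\<dots> \<le> enat (card (SigmaI l I a))" using K by (rule order_trans) (simp add: cs)
    finally show ?thesis .
  qed
  then show ?thesis by (simp add: N_def l_def)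
qed

lemma main_lemma:
  fixes a :: "nat \<Rightarrow> 'a::group_add"
  shows "finite I \<Longrightarrow> 1 \<le> l \<Longrightarrow> l \<le> card I \<Longrightarrow>
         min (p_grp TYPE('a)) (enat (NI l I a - l + 1)) \<le> enat (card (SigmaI l I a))"
proof (induction l arbitrary: I)
  case 0 then show ?case by simp
next
  case (Suc l')
  show ?case
  proof (cases "l' = 0")
    case True
    have n1: "NI 1 I a \<le> card (a ` I)"
    proof -
      have "NI 1 I a \<le> (\<Sum>x\<in>a ` I. (1::nat))" unfolding NI_def by (rule sum_mono) simp
      then show ?thesis by simp
    qed
    have "a ` I \<subseteq> SigmaI 1 I a"
    proof
      fix x assume "x \<in> a ` I"
      then obtain i where i: "i \<in> I" "x = a i" by blast
      then have "distinct [i] \<and> length [i] = 1 \<and> set [i] \<subseteq> I \<and> x = sum_list (map a [i])" by simp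
      then show "x \<in> SigmaI 1 I a" unfolding SigmaI_def by blast
    qed
    then have "card (a ` I) \<le> card (SigmaI 1 I a)" using card_mono[OF SigmaI_finite[OF Suc.prems(1)]] by blast
    moreover have "card (SigmaI 1 I a) \<noteq> 0"
      using SigmaI_nonempty[OF Suc.prems(1), of 1 a] SigmaI_finite[OF Suc.prems(1), of 1 a] Suc.prems(3) True
      by simp
    ultimately have "NI 1 I a - 1 + 1 \<le> card (SigmaI 1 I a)" using n1 by linarith
    then have "enat (NI 1 I a - 1 + 1) \<le> enat (card (SigmaI 1 I a))" by simp
    then show ?thesis using True by (simp add: min.coboundedI2)
  next
    case False
    then have "1 \<le> l'" by simp
    show ?thesis by (rule main_step[OF Suc.prems(1) \<open>1 \<le> l'\<close> Suc.prems(3) Suc.IH]) (use \<open>1 \<le> l'\<close> in auto)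
  qed
qed

theorem theorem6p2:
  fixes l m :: nat and a :: "nat \<Rightarrow> 'a::group_add"
  assumes "1 \<le> l" and "l \<le> m"
  shows "enat (card (Sigma_l l m a))
           \<ge> min (p_grp TYPE('a)) (enat ((\<Sum>x\<in>a ` {1..m}. mu l m a x) - l + 1))"
proof -
  have e1: "Sigma_l l m a = SigmaI l {1..m} a" unfolding Sigma_l_def SigmaI_def by simp
  have e2: "(\<Sum>x\<in>a ` {1..m}. mu l m a x) = NI l {1..m} a"
    unfolding NI_def mu_def rho_def rhoI_def by simp
  show ?thesis unfolding e1 e2 using main_lemma[of "{1..m}" l a] assms by simp
qed

end
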